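(* For each $n\in\mathbb{N}$, the $\mathbb{Z}$-linear map $\mathbf{f}_n:QSymm\to QSymm$ given on compositions by $\mathbf{f}_n([a_1,\dots,a_m])=[na_1,\dots,na_m]$ is a Hopf algebra endomorphism of $QSymm$; $\mathbf{f}_1=\mathrm{id}$, $\mathbf{f}_n\mathbf{f}_m=\mathbf{f}_{nm}$; $\mathbf{f}_n$ maps the subring $Symm\subset QSymm$ of symmetric functions into itself, where it acts as the Frobenius operator determined by $\mathbf{f}_n(p_k)=p_{nk}$ on the power sums $p_k=\sum_i X_i^k$; and for every prime $p$ and every $x\in QSymm$, $\mathbf{f}_p(x)\equiv x^p \pmod{p\,QSymm}$. *)

theory Defs
  imports "HOL-Library.Poly_Mapping" "HOL-Computational_Algebra.Primes"
begin

text \<open>QSymm over the integers, modelled as the free abelian group on compositions,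
  an element being its expansion in the monomial quasisymmetric basis M_alpha.\<close>

type_synonym qsym = "nat list \<Rightarrow>\<^sub>0 int"
type_synonym qsym2 = "(nat list \<times> nat list) \<Rightarrow>\<^sub>0 int"   \<comment> \<open>QSymm tensor QSymm\<close>

definition is_composition :: "nat list \<Rightarrow> bool" where
  "is_composition a \<longleftrightarrow> 0 \<notin> set a"

definition in_QSymm :: "qsym \<Rightarrow> bool" where
  "in_QSymm x \<longleftrightarrow> (\<forall>a \<in> Poly_Mapping.keys x. is_composition a)"

definition in_QSymm2 :: "qsym2 \<Rightarrow> bool" where
  "in_QSymm2 t \<longleftrightarrow> (\<forall>(a,b) \<in> Poly_Mapping.keys t. is_composition a \<and> is_composition b)"

fun qshuffle :: "nat list \<Rightarrow> nat list \<Rightarrow> qsym" where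
  "qshuffle [] b = frag_of b"
| "qshuffle a [] = frag_of a"
| "qshuffle (x # a) (y # b) =
     frag_extend (\<lambda>c. frag_of (x # c)) (qshuffle a (y # b))
   + frag_extend (\<lambda>c. frag_of (y # c)) (qshuffle (x # a) b)
   + frag_extend (\<lambda>c. frag_of ((x + y) # c)) (qshuffle a b)"

definition qone :: qsym where "qone = frag_of []"

definition qmult :: "qsym \<Rightarrow> qsym \<Rightarrow> qsym" where
  "qmult x y = frag_extend (\<lambda>a. frag_extend (\<lambda>b. qshuffle a b) y) x"

fun qpow :: "qsym \<Rightarrow> nat \<Rightarrow> qsym" where
  "qpow x 0 = qone"
| "qpow x (Suc k) = qmult x (qpow x k)"

definition qcoprod :: "qsym \<Rightarrow> qsym2" where
  "qcoprod x = frag_extend (\<lambda>a. \<Sum>i\<in>{0..length a}. frag_of (take i a, drop i a)) x"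

definition qcounit :: "qsym \<Rightarrow> int" where
  "qcounit x = Poly_Mapping.lookup x []"

definition qtensor :: "qsym \<Rightarrow> qsym \<Rightarrow> qsym2" where
  "qtensor u v = frag_extend (\<lambda>a. frag_extend (\<lambda>b. frag_of (a, b)) v) u"

definition tensor_map :: "(qsym \<Rightarrow> qsym) \<Rightarrow> qsym2 \<Rightarrow> qsym2" where
  "tensor_map f t = frag_extend (\<lambda>(a, b). qtensor (f (frag_of a)) (f (frag_of b))) t"

text \<open>Hopf algebra (= bialgebra) endomorphism of QSymm: a Z-linear map QSymm to QSymm
  preserving unit, product, coproduct and counit.\<close>
definition hopf_endo :: "(qsym \<Rightarrow> qsym) \<Rightarrow> bool" where
  "hopf_endo f \<longleftrightarrow>
     (\<forall>x. in_QSymm x \<longrightarrow> in_QSymm (f x))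
   \<and> (\<forall>x y. in_QSymm x \<longrightarrow> in_QSymm y \<longrightarrow> f (x + y) = f x + f y)
   \<and> (\<forall>c x. in_QSymm x \<longrightarrow> f (frag_cmul c x) = frag_cmul c (f x))
   \<and> f qone = qone
   \<and> (\<forall>x y. in_QSymm x \<longrightarrow> in_QSymm y \<longrightarrow> f (qmult x y) = qmult (f x) (f y))
   \<and> (\<forall>x. in_QSymm x \<longrightarrow> qcoprod (f x) = tensor_map f (qcoprod x))
   \<and> (\<forall>x. in_QSymm x \<longrightarrow> qcounit (f x) = qcounit x)"

definition frob :: "nat \<Rightarrow> qsym \<Rightarrow> qsym" where
  "frob n x = frag_extend (\<lambda>a. frag_of (map (\<lambda>ai. n * ai) a)) x"

text \<open>Symm inside QSymm: quasisymmetric functions whose M-coefficients are invariant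
  under rearrangement of the composition (i.e. integer combinations of the
  monomial symmetric functions m_lambda).\<close>
definition in_Symm :: "qsym \<Rightarrow> bool" where
  "in_Symm x \<longleftrightarrow> in_QSymm x \<and> (\<forall>a b. mset a = mset b \<longrightarrow> Poly_Mapping.lookup x a = Poly_Mapping.lookup x b)"

text \<open>Power sum p_k = sum_i X_i^k = M_[k].\<close>
definition psum :: "nat \<Rightarrow> qsym" where
  "psum k = frag_of [k]"

definition divisible_by :: "nat \<Rightarrow> qsym \<Rightarrow> bool" where
  "divisible_by p z \<longleftrightarrow> (\<forall>a. int p dvd Poly_Mapping.lookup z a)"

end

theory Submission
  imports Defs
begin


definition pcong :: "nat \<Rightarrow> 'a::comm_ring_1 \<Rightarrow> 'a \<Rightarrow> bool" where
  "pcong p a b \<longleftrightarrow> (\<exists>h. a - b = of_nat p * h)"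

lemma pcong_refl[simp]: "pcong p a a"
  unfolding pcong_def by (rule exI[of _ 0]) simp

lemma pcong_sym: "pcong p a b \<Longrightarrow> pcong p b a"
  unfolding pcong_def by (metis minus_diff_eq mult_minus_right)

lemma pcong_trans: "pcong p a b \<Longrightarrow> pcong p b c \<Longrightarrow> pcong p a c"
  unfolding pcong_def
proof (elim exE)
  fix h g assume "a - b = of_nat p * h" "b - c = of_nat p * g"
  have "a - c = (a - b) + (b - c)" by simp
  also have "\<dots> = of_nat p * (h + g)" using \<open>a - b = _\<close> \<open>b - c = _\<close> by (simp add: distrib_left)
  finally show "\<exists>h. a - c = of_nat p * h" by blast
qed

lemma pcong_add: "pcong p a b \<Longrightarrow> pcong p c d \<Longrightarrow> pcong p (a + c) (b + d)"
  unfolding pcong_def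
proof (elim exE)
  fix h g assume "a - b = of_nat p * h" "c - d = of_nat p * g"
  then have "(a + c) - (b + d) = of_nat p * (h + g)" by (simp add: algebra_simps)
  then show "\<exists>h. (a + c) - (b + d) = of_nat p * h" by blast
qed

lemma pcong_diff: "pcong p a b \<Longrightarrow> pcong p c d \<Longrightarrow> pcong p (a - c) (b - d)"
  unfolding pcong_def
proof (elim exE)
  fix h g assume "a - b = of_nat p * h" "c - d = of_nat p * g"
  then have "(a - c) - (b - d) = of_nat p * (h - g)" by (simp add: algebra_simps)
  then show "\<exists>h. (a - c) - (b - d) = of_nat p * h" by blast
qed

lemma pcong_mult: "pcong p a b \<Longrightarrow> pcong p c d \<Longrightarrow> pcong p (a * c) (b * d)"
  unfolding pcong_def
proof (elim exE)
  fix h g assume "a - b = of_nat p * h" "c - d = of_nat p * g"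
  then have "a * c - b * d = (a - b) * c + b * (c - d)" by (simp add: algebra_simps)
  also have "\<dots> = of_nat p * (h * c + b * g)" using \<open>a - b = _\<close> \<open>c - d = _\<close> by (simp add: algebra_simps)
  finally show "\<exists>h. a * c - b * d = of_nat p * h" by blast
qed

lemma pcong_sum: "(\<And>i. i \<in> A \<Longrightarrow> pcong p (f i) (g i)) \<Longrightarrow> pcong p (sum f A) (sum g A)"
  by (induction A rule: infinite_finite_induct) (auto intro: pcong_add)

lemma pcong_multiple: "pcong p (of_nat p * h) 0"
  unfolding pcong_def by auto

lemma freshman:
  fixes x y :: "'a::comm_ring_1"
  assumes "prime p"
  shows "pcong p ((x + y) ^ p) (x ^ p + y ^ p)"
proof -
  have p0: "p > 0" using assms prime_gt_0_nat by blast
  have "(x + y) ^ p = (\<Sum>k\<le>p. of_nat (p choose k) * x ^ k * y ^ (p - k))"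
    by (rule binomial_ring)
  also have "\<dots> = (\<Sum>k\<in>{0,p}. of_nat (p choose k) * x ^ k * y ^ (p - k))
      + (\<Sum>k\<in>{..p} - {0,p}. of_nat (p choose k) * x ^ k * y ^ (p - k))"
    by (subst sum.subset_diff[of "{0,p}"]) (auto simp: add.commute)
  also have "(\<Sum>k\<in>{0,p}. of_nat (p choose k) * x ^ k * y ^ (p - k)) = x ^ p + y ^ p"
    using p0 by (simp add: add.commute)
  finally have eq: "(x + y) ^ p = x ^ p + y ^ p + (\<Sum>k\<in>{..p} - {0,p}. of_nat (p choose k) * x ^ k * y ^ (p - k))" .
  have "pcong p (\<Sum>k\<in>{..p} - {0,p}. of_nat (p choose k) * x ^ k * y ^ (p - k)) (\<Sum>k\<in>{..p} - {0,p}. 0)"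
  proof (rule pcong_sum)
    fix k assume "k \<in> {..p} - {0,p}"
    then have "p dvd (p choose k)" using assms by (intro dvd_choose_prime) auto
    then obtain q where "p choose k = p * q" by blast
    then have "of_nat (p choose k) * x ^ k * y ^ (p - k) = of_nat p * (of_nat q * x ^ k * y ^ (p - k))"
      by (simp add: mult.assoc)
    then show "pcong p (of_nat (p choose k) * x ^ k * y ^ (p - k)) 0" by (simp add: pcong_multiple)
  qed
  then have "pcong p (x ^ p + y ^ p + (\<Sum>k\<in>{..p} - {0,p}. of_nat (p choose k) * x ^ k * y ^ (p - k))) (x ^ p + y ^ p + 0)"
    by (intro pcong_add) auto
  then show ?thesis using eq by simp
qed

lemma freshman_diff:
  fixes x y :: "'a::comm_ring_1"
  assumes "prime p"
  shows "pcong p ((x - y) ^ p) (x ^ p - y ^ p)"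
proof -
  have "pcong p (((x - y) + y) ^ p) ((x - y) ^ p + y ^ p)" by (rule freshman[OF assms])
  then have "pcong p (x ^ p - y ^ p) ((x - y) ^ p + y ^ p - y ^ p)"
    by (intro pcong_diff) auto
  then show ?thesis by (simp add: pcong_sym)
qed

lemma freshman_sum:
  fixes f :: "'b \<Rightarrow> 'a::comm_ring_1"
  assumes "prime p"
  shows "pcong p ((sum f A) ^ p) (\<Sum>i\<in>A. f i ^ p)"
proof (induction A rule: infinite_finite_induct)
  case (infinite A) then show ?case using assms prime_gt_0_nat by (simp add: power_0_left)
next
  case empty then show ?case using assms prime_gt_0_nat by (simp add: power_0_left)
next
  case (insert x F)
  have "pcong p ((f x + sum f F) ^ p) (f x ^ p + sum f F ^ p)" by (rule freshman[OF assms])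
  moreover have "pcong p (f x ^ p + sum f F ^ p) (f x ^ p + (\<Sum>i\<in>F. f i ^ p))"
    by (intro pcong_add insert) auto
  ultimately show ?case using insert by (auto intro: pcong_trans)
qed




type_synonym mpoly = "(nat \<Rightarrow>\<^sub>0 nat) \<Rightarrow>\<^sub>0 int"

definition Xm :: "nat \<Rightarrow> nat \<Rightarrow> mpoly" where
  "Xm i e = Poly_Mapping.single (Poly_Mapping.single i e) 1"

fun E :: "nat \<Rightarrow> nat \<Rightarrow> nat list \<Rightarrow> mpoly" where
  "E k N [] = 1"
| "E k N (x # a) = (\<Sum>i\<in>{k..<N}. Xm i x * E (Suc i) N a)"

definition ev :: "nat \<Rightarrow> nat \<Rightarrow> qsym \<Rightarrow> mpoly" where
  "ev k N z = frag_extend (E k N) z"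

lemma Xm_mult: "Xm i x * Xm i y = Xm i (x + y)"
  unfolding Xm_def by (simp add: mult_single single_add)

lemma Xm_pow: "Xm i x ^ n = Xm i (n * x)"
proof (induction n)
  case 0 then show ?case by (simp add: Xm_def)
next
  case (Suc n) then show ?case by (simp add: Xm_mult add.commute)
qed

lemma frag_extend_comp:
  "frag_extend g (frag_extend f x) = frag_extend (\<lambda>a. frag_extend g (f a)) x"
proof -
  have "Poly_Mapping.keys x \<subseteq> UNIV" by simp
  then show ?thesis
    by (induction x rule: frag_induction) (auto simp: frag_extend_diff)
qed

lemma frag_extend_mult_left:
  fixes f :: "'b \<Rightarrow> ('a::comm_monoid_add \<Rightarrow>\<^sub>0 int)"
  shows "frag_extend (\<lambda>b. c * f b) y = c * frag_extend f y"
proof -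
  have "Poly_Mapping.keys y \<subseteq> UNIV" by simp
  then show ?thesis
    by (induction y rule: frag_induction) (auto simp: frag_extend_diff right_diff_distrib)
qed

lemma frag_extend_mult_right:
  fixes f :: "'b \<Rightarrow> ('a::comm_monoid_add \<Rightarrow>\<^sub>0 int)"
  shows "frag_extend (\<lambda>b. f b * c) y = frag_extend f y * c"
  using frag_extend_mult_left[of c f y] by (simp add: mult.commute)

lemma ev_prefix:
  "ev k N (frag_extend (\<lambda>c. frag_of (x # c)) z) = (\<Sum>i\<in>{k..<N}. Xm i x * ev (Suc i) N z)"
proof -
  have "Poly_Mapping.keys z \<subseteq> UNIV" by simp
  then show ?thesis unfolding ev_def
    by (induction z rule: frag_induction)
       (auto simp: frag_extend_diff right_diff_distrib sum_subtractf)
qed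

lemma double_sum:
  fixes f :: "nat \<Rightarrow> nat \<Rightarrow> 'a::comm_monoid_add"
  shows "(\<Sum>i\<in>{k..<N}. \<Sum>j\<in>{k..<N}. f i j) =
    (\<Sum>i\<in>{k..<N}. \<Sum>j\<in>{Suc i..<N}. f i j) + (\<Sum>j\<in>{k..<N}. \<Sum>i\<in>{Suc j..<N}. f i j)
    + (\<Sum>i\<in>{k..<N}. f i i)"
proof (cases "k \<le> N")
  case False then show ?thesis by simp
next
  case True
  then show ?thesis
  proof (induction k rule: inc_induct)
    case base then show ?case by simp
  next
    case (step n)
    have S: "{n..<N} = insert n {Suc n..<N}" using step by auto
    have "(\<Sum>i\<in>{n..<N}. \<Sum>j\<in>{n..<N}. f i j) =
       f n n + (\<Sum>j\<in>{Suc n..<N}. f n j) + (\<Sum>i\<in>{Suc n..<N}. f i n)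
       + (\<Sum>i\<in>{Suc n..<N}. \<Sum>j\<in>{Suc n..<N}. f i j)"
      by (simp add: S sum.distrib add_ac)
    also have "\<dots> = (\<Sum>i\<in>{n..<N}. \<Sum>j\<in>{Suc i..<N}. f i j) + (\<Sum>j\<in>{n..<N}. \<Sum>i\<in>{Suc j..<N}. f i j)
    + (\<Sum>i\<in>{n..<N}. f i i)"
      by (simp add: step.IH S add_ac)
    finally show ?case .
  qed
qed

lemma ev_frag_of[simp]: "ev k N (frag_of a) = E k N a"
  by (simp add: ev_def)

lemma ev_add: "ev k N (u + v) = ev k N u + ev k N v"
  by (simp add: ev_def frag_extend_add)

lemma ev_diff: "ev k N (u - v) = ev k N u - ev k N v"
  by (simp add: ev_def frag_extend_diff)

lemma ev_qshuffle: "ev k N (qshuffle a b) = E k N a * E k N b"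
proof (induction a b arbitrary: k rule: qshuffle.induct)
  case (1 b) then show ?case by simp
next
  case (2 x a) then show ?case by simp
next
  case (3 x a y b)
  define A where "A i = Xm i x * E (Suc i) N a" for i
  define B where "B j = Xm j y * E (Suc j) N b" for j
  have "ev k N (qshuffle (x # a) (y # b)) =
      (\<Sum>i\<in>{k..<N}. Xm i x * (E (Suc i) N a * E (Suc i) N (y # b)))
    + (\<Sum>i\<in>{k..<N}. Xm i y * (E (Suc i) N (x # a) * E (Suc i) N b))
    + (\<Sum>i\<in>{k..<N}. Xm i (x + y) * (E (Suc i) N a * E (Suc i) N b))"
    by (simp add: ev_add ev_prefix 3)
  also have "\<dots> = (\<Sum>i\<in>{k..<N}. \<Sum>j\<in>{Suc i..<N}. A i * B j) + (\<Sum>j\<in>{k..<N}. \<Sum>i\<in>{Suc j..<N}. A i * B j)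
    + (\<Sum>i\<in>{k..<N}. A i * B i)"
    by (simp add: A_def B_def sum_distrib_left sum_distrib_right Xm_mult[symmetric] mult_ac)
  also have "\<dots> = (\<Sum>i\<in>{k..<N}. \<Sum>j\<in>{k..<N}. A i * B j)"
    by (rule double_sum[symmetric])
  also have "\<dots> = E k N (x # a) * E k N (y # b)"
    by (simp add: A_def B_def sum_product)
  finally show ?case .
qed




lemma ev_qmult: "ev k N (qmult x y) = ev k N x * ev k N y"
proof -
  have "ev k N (qmult x y) = frag_extend (\<lambda>a. frag_extend (\<lambda>b. E k N a * E k N b) y) x"
    unfolding qmult_def ev_def
    by (simp add: frag_extend_comp ev_qshuffle[unfolded ev_def])
  also have "\<dots> = frag_extend (\<lambda>a. E k N a * ev k N y) x"
    by (simp add: frag_extend_mult_left ev_def)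
  also have "\<dots> = ev k N x * ev k N y"
    by (simp add: frag_extend_mult_right ev_def)
  finally show ?thesis .
qed

lemma ev_qone: "ev k N qone = 1"
  by (simp add: qone_def)

lemma ev_qpow: "ev k N (qpow x n) = ev k N x ^ n"
  by (induction n) (simp_all add: ev_qone ev_qmult)

lemma E_frob:
  assumes "prime p"
  shows "pcong p (E k N (map ((*) p) a)) (E k N a ^ p)"
proof (induction a arbitrary: k)
  case Nil then show ?case by simp
next
  case (Cons x a)
  have A: "pcong p (E k N (x # a) ^ p) (\<Sum>i\<in>{k..<N}. (Xm i x * E (Suc i) N a) ^ p)"
    unfolding E.simps by (rule freshman_sum[OF assms])
  have B: "pcong p (\<Sum>i\<in>{k..<N}. (Xm i x * E (Suc i) N a) ^ p) (E k N (map ((*) p) (x # a)))"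
  proof -
    have "pcong p (\<Sum>i\<in>{k..<N}. Xm i (p * x) * E (Suc i) N a ^ p) (\<Sum>i\<in>{k..<N}. Xm i (p * x) * E (Suc i) N (map ((*) p) a))"
      by (rule pcong_sum, rule pcong_mult, rule pcong_refl, rule pcong_sym[OF Cons.IH])
    then show ?thesis by (simp add: power_mult_distrib Xm_pow)
  qed
  show ?case by (rule pcong_sym[OF pcong_trans[OF A B]])
qed

lemma frob_as_extend: "frob n x = frag_extend (frag_of \<circ> map ((*) n)) x"
  by (simp add: frob_def comp_def)

lemma ev_frob:
  assumes "prime p"
  shows "pcong p (ev k N (frob p x)) (ev k N x ^ p)"
proof -
  have p0: "p > 0" using assms prime_gt_0_nat by blast
  have eq: "ev k N (frob p x) = frag_extend (\<lambda>a. E k N (map ((*) p) a)) x"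
    unfolding frob_def ev_def by (simp add: frag_extend_comp)
  have "Poly_Mapping.keys x \<subseteq> UNIV" by simp
  then have "pcong p (frag_extend (\<lambda>a. E k N (map ((*) p) a)) x) (frag_extend (E k N) x ^ p)"
  proof (induction x rule: frag_induction)
    case zero then show ?case using p0 by (simp add: power_0_left)
  next
    case (one a) then show ?case by (simp add: E_frob[OF assms])
  next
    case (diff a b)
    have "pcong p (frag_extend (\<lambda>a. E k N (map ((*) p) a)) a - frag_extend (\<lambda>a. E k N (map ((*) p) a)) b)
       (frag_extend (E k N) a ^ p - frag_extend (E k N) b ^ p)"
      by (intro pcong_diff diff)
    moreover have "pcong p (frag_extend (E k N) a ^ p - frag_extend (E k N) b ^ p) ((frag_extend (E k N) a - frag_extend (E k N) b) ^ p)"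
      by (rule pcong_sym[OF freshman_diff[OF assms]])
    ultimately show ?case unfolding frag_extend_diff by (rule pcong_trans)
  qed
  then show ?thesis using eq by (simp add: ev_def)
qed

lemma lookup_single_mult_gen:
  "Poly_Mapping.lookup (Poly_Mapping.single s c * f) k = c * (\<Sum>q. Poly_Mapping.lookup f q when k = s + q)"
proof -
  have "Poly_Mapping.lookup (Poly_Mapping.single s c * f) k
     = (\<Sum>l. (c when s = l) * (\<Sum>q. Poly_Mapping.lookup f q when k = l + q))"
    unfolding lookup_mult lookup_single ..
  also have "\<dots> = (\<Sum>l. (c * (\<Sum>q. Poly_Mapping.lookup f q when k = l + q)) when s = l)"
    by (simp add: when_mult)
  also have "\<dots> = c * (\<Sum>q. Poly_Mapping.lookup f q when k = s + q)"
    by (rule Sum_any_when_equal')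
  finally show ?thesis .
qed

lemma lookup_single_mult_shift:
  fixes f :: "('b::cancel_comm_monoid_add) \<Rightarrow>\<^sub>0 'c::comm_semiring_1"
  shows "Poly_Mapping.lookup (Poly_Mapping.single s c * f) (s + q) = c * Poly_Mapping.lookup f q"
proof -
  have "(\<Sum>q'. Poly_Mapping.lookup f q' when s + q = s + q') = (\<Sum>q'. Poly_Mapping.lookup f q' when q' = q)"
    by (rule Sum_any.cong) (auto simp: when_def)
  then show ?thesis by (simp add: lookup_single_mult_gen)
qed

lemma lookup_single_mult_zero:
  fixes f :: "('b::cancel_comm_monoid_add) \<Rightarrow>\<^sub>0 'c::comm_semiring_1"
  assumes "\<And>q. k \<noteq> s + q"
  shows "Poly_Mapping.lookup (Poly_Mapping.single s c * f) k = 0"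
  using assms by (simp add: lookup_single_mult_gen when_def)




fun mon :: "nat \<Rightarrow> nat list \<Rightarrow> (nat \<Rightarrow>\<^sub>0 nat)" where
  "mon k [] = 0"
| "mon k (z # a) = Poly_Mapping.single k z + mon (Suc k) a"

lemma lookup_mon_below: "j < k \<Longrightarrow> Poly_Mapping.lookup (mon k a) j = 0"
  by (induction a arbitrary: k) (auto simp: lookup_add lookup_single)

lemma lookup_mon_at: "Poly_Mapping.lookup (mon k (z # a)) k = z"
  by (simp add: lookup_add lookup_mon_below)

lemma Xm_mult_lookup_cases:
  assumes "Poly_Mapping.lookup (Xm i y * f) m \<noteq> 0"
  obtains q where "m = Poly_Mapping.single i y + q" "Poly_Mapping.lookup (Xm i y * f) m = Poly_Mapping.lookup f q"
proof -
  have "\<exists>q. m = Poly_Mapping.single i y + q"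
    using assms lookup_single_mult_zero[of m "Poly_Mapping.single i y" 1 f] unfolding Xm_def by blast
  then obtain q where q: "m = Poly_Mapping.single i y + q" by blast
  then have "Poly_Mapping.lookup (Xm i y * f) m = Poly_Mapping.lookup f q"
    unfolding Xm_def by (simp add: lookup_single_mult_shift)
  with q that show ?thesis by blast
qed

lemma E_support:
  assumes "Poly_Mapping.lookup (E k N b) m \<noteq> 0" "j < k"
  shows "Poly_Mapping.lookup m j = 0"
  using assms
proof (induction b arbitrary: k m)
  case Nil
  then have "m = 0" by (simp add: lookup_one when_def split: if_splits)
  then show ?case by simp
next
  case (Cons y b)
  from Cons.prems(1) have "(\<Sum>i\<in>{k..<N}. Poly_Mapping.lookup (Xm i y * E (Suc i) N b) m) \<noteq> 0"
    by (simp add: lookup_sum)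
  then obtain i where i: "i \<in> {k..<N}" "Poly_Mapping.lookup (Xm i y * E (Suc i) N b) m \<noteq> 0"
    by (meson sum.not_neutral_contains_not_neutral)
  obtain q where q: "m = Poly_Mapping.single i y + q"
     "Poly_Mapping.lookup (Xm i y * E (Suc i) N b) m = Poly_Mapping.lookup (E (Suc i) N b) q"
    using i(2) by (rule Xm_mult_lookup_cases)
  have "Poly_Mapping.lookup q j = 0"
    using Cons.IH[of "Suc i" q] i q Cons.prems(2) by auto
  moreover have "j \<noteq> i" using i Cons.prems(2) by auto
  ultimately show ?case using q by (simp add: lookup_add lookup_single)
qed

lemma E_term_zero:
  assumes "is_composition a" "0 < y" "k \<le> i" "\<not> (i = k \<and> a \<noteq> [] \<and> hd a = y)"
  shows "Poly_Mapping.lookup (Xm i y * E (Suc i) N b) (mon k a) = 0"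
proof (rule ccontr)
  assume ne: "Poly_Mapping.lookup (Xm i y * E (Suc i) N b) (mon k a) \<noteq> 0"
  then obtain q where q: "mon k a = Poly_Mapping.single i y + q"
     "Poly_Mapping.lookup (Xm i y * E (Suc i) N b) (mon k a) = Poly_Mapping.lookup (E (Suc i) N b) q"
    by (rule Xm_mult_lookup_cases)
  have qz: "Poly_Mapping.lookup q j = 0" if "j < Suc i" for j
    using E_support[of "Suc i" N b q j] ne q that by auto
  show False
  proof (cases a)
    case Nil
    then have "(0::nat \<Rightarrow>\<^sub>0 nat) = Poly_Mapping.single i y + q" using q(1) by simp
    then have "Poly_Mapping.lookup (0::nat \<Rightarrow>\<^sub>0 nat) i = Poly_Mapping.lookup (Poly_Mapping.single i y + q) i"
      by (rule arg_cong)
    then show False using \<open>0 < y\<close> by (simp add: lookup_add)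
  next
    case (Cons z a')
    have z0: "z \<noteq> 0" using assms(1) Cons by (simp add: is_composition_def)
    have L: "z = Poly_Mapping.lookup (Poly_Mapping.single i y) k + Poly_Mapping.lookup q k"
      using q(1) lookup_mon_at[of k z a'] Cons by (simp add: lookup_add)
    show False
    proof (cases "i = k")
      case True
      then have "z \<noteq> y" using assms(4) Cons by simp
      moreover have "z = y + Poly_Mapping.lookup q k" using L True by simp
      moreover have "Poly_Mapping.lookup q k = 0" using qz True by simp
      ultimately show False by simp
    next
      case False
      then have "z = Poly_Mapping.lookup q k" using L by (simp add: lookup_single)
      moreover have "Poly_Mapping.lookup q k = 0" using qz assms(3) by simp
      ultimately show False using z0 by simp
    qed
  qed
qed

lemma E_coeff:
  assumes "is_composition a" "is_composition b" "k + length a \<le> N"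
  shows "Poly_Mapping.lookup (E k N b) (mon k a) = (if a = b then 1 else 0)"
  using assms
proof (induction b arbitrary: k a)
  case Nil
  show ?case
  proof (cases a)
    case Nil then show ?thesis by (simp add: lookup_one)
  next
    case (Cons z a')
    have "z \<noteq> 0" using Nil.prems(1) Cons by (simp add: is_composition_def)
    then have "mon k a \<noteq> 0" using lookup_mon_at[of k z a'] Cons by auto
    then show ?thesis using Cons by (simp add: lookup_one when_def)
  qed
next
  case (Cons y b)
  have y0: "0 < y" and cb: "is_composition b" using Cons.prems(2) by (auto simp: is_composition_def)
  have S: "Poly_Mapping.lookup (E k N (y # b)) (mon k a)
      = (\<Sum>i\<in>{k..<N}. Poly_Mapping.lookup (Xm i y * E (Suc i) N b) (mon k a))"
    by (simp add: lookup_sum)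
  show ?case
  proof (cases "a \<noteq> [] \<and> hd a = y")
    case False
    then have "(\<Sum>i\<in>{k..<N}. Poly_Mapping.lookup (Xm i y * E (Suc i) N b) (mon k a)) = 0"
      by (intro sum.neutral ballI E_term_zero Cons.prems(1) y0) auto
    moreover have "a \<noteq> y # b" using False by auto
    ultimately show ?thesis using S by simp
  next
    case True
    then obtain a' where a: "a = y # a'" by (cases a) auto
    have kN: "k \<in> {k..<N}" using Cons.prems(3) a by simp
    have ca: "is_composition a'" using Cons.prems(1) a by (simp add: is_composition_def)
    have "(\<Sum>i\<in>{k..<N}. Poly_Mapping.lookup (Xm i y * E (Suc i) N b) (mon k a))
        = Poly_Mapping.lookup (Xm k y * E (Suc k) N b) (mon k a)
          + (\<Sum>i\<in>{k..<N} - {k}. Poly_Mapping.lookup (Xm i y * E (Suc i) N b) (mon k a))"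
      by (rule sum.remove[OF _ kN]) simp
    also have "(\<Sum>i\<in>{k..<N} - {k}. Poly_Mapping.lookup (Xm i y * E (Suc i) N b) (mon k a)) = 0"
      by (intro sum.neutral ballI E_term_zero Cons.prems(1) y0) auto
    also have "Poly_Mapping.lookup (Xm k y * E (Suc k) N b) (mon k a)
        = Poly_Mapping.lookup (E (Suc k) N b) (mon (Suc k) a')"
      unfolding Xm_def a by (simp add: lookup_single_mult_shift)
    also have "\<dots> = (if a' = b then 1 else 0)"
      using Cons.IH[of a' "Suc k"] ca cb Cons.prems(3) a by simp
    finally show ?thesis using S a by simp
  qed
qed

lemma lookup_frag_extend:
  "Poly_Mapping.lookup (frag_extend f y) m = (\<Sum>b\<in>Poly_Mapping.keys y. Poly_Mapping.lookup y b * Poly_Mapping.lookup (f b) m)"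
  by (simp add: frag_extend_def lookup_sum)

lemma ev_coeff:
  assumes "in_QSymm y" "is_composition a" "length a \<le> N"
  shows "Poly_Mapping.lookup (ev 0 N y) (mon 0 a) = Poly_Mapping.lookup y a"
proof -
  have "Poly_Mapping.lookup (ev 0 N y) (mon 0 a) = (\<Sum>b\<in>Poly_Mapping.keys y. Poly_Mapping.lookup y b * (if a = b then 1 else 0))"
    unfolding ev_def lookup_frag_extend
    by (intro sum.cong refl) (use assms in \<open>simp add: E_coeff in_QSymm_def\<close>)
  also have "\<dots> = (\<Sum>b\<in>Poly_Mapping.keys y. if b = a then Poly_Mapping.lookup y b else 0)"
    by (intro sum.cong) auto
  also have "\<dots> = Poly_Mapping.lookup y a"
    by (simp add: sum.delta' in_keys_iff)
  finally show ?thesis .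
qed




lemma keys_prefix:
  "Poly_Mapping.keys (frag_extend (\<lambda>c. frag_of (x # c)) z) \<subseteq> (\<lambda>c. x # c) ` Poly_Mapping.keys z"
  using keys_frag_extend[of "\<lambda>c. frag_of (x # c)" z] by auto

lemma qshuffle_comp:
  "is_composition a \<Longrightarrow> is_composition b \<Longrightarrow> c \<in> Poly_Mapping.keys (qshuffle a b) \<Longrightarrow> is_composition c"
proof (induction a b arbitrary: c rule: qshuffle.induct)
  case (1 b) then show ?case by simp
next
  case (2 x a) then show ?case by simp
next
  case (3 x a y b)
  have x: "x \<noteq> 0" and y: "y \<noteq> 0" and ca: "is_composition a" and cb: "is_composition b"
    using "3.prems" by (auto simp: is_composition_def)
  let ?A = "frag_extend (\<lambda>c. frag_of (x # c)) (qshuffle a (y # b))"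
  let ?B = "frag_extend (\<lambda>c. frag_of (y # c)) (qshuffle (x # a) b)"
  let ?C = "frag_extend (\<lambda>c. frag_of ((x + y) # c)) (qshuffle a b)"
  have K1: "Poly_Mapping.keys (?A + ?B + ?C) \<subseteq> Poly_Mapping.keys (?A + ?B) \<union> Poly_Mapping.keys ?C"
    by (rule keys_add)
  have K2: "Poly_Mapping.keys (?A + ?B) \<subseteq> Poly_Mapping.keys ?A \<union> Poly_Mapping.keys ?B"
    by (rule keys_add)
  have "c \<in> Poly_Mapping.keys (?A + ?B + ?C)" using "3.prems"(3) by (simp only: qshuffle.simps)
  then have "c \<in> Poly_Mapping.keys ?A \<or> c \<in> Poly_Mapping.keys ?B \<or> c \<in> Poly_Mapping.keys ?C"
    using K1 K2 by blast
  then show ?case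
  proof (elim disjE)
    assume "c \<in> Poly_Mapping.keys (frag_extend (\<lambda>c. frag_of (x # c)) (qshuffle a (y # b)))"
    then obtain d where "c = x # d" "d \<in> Poly_Mapping.keys (qshuffle a (y # b))" using keys_prefix[of x "qshuffle a (y # b)"] by blast
    then show ?thesis using "3.IH"(1)[OF ca "3.prems"(2)] x by (auto simp: is_composition_def)
  next
    assume "c \<in> Poly_Mapping.keys (frag_extend (\<lambda>c. frag_of (y # c)) (qshuffle (x # a) b))"
    then obtain d where "c = y # d" "d \<in> Poly_Mapping.keys (qshuffle (x # a) b)" using keys_prefix[of y "qshuffle (x # a) b"] by blast
    then show ?thesis using "3.IH"(2)[OF "3.prems"(1) cb] y by (auto simp: is_composition_def)
  next
    assume "c \<in> Poly_Mapping.keys (frag_extend (\<lambda>c. frag_of ((x + y) # c)) (qshuffle a b))"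
    then obtain d where "c = (x + y) # d" "d \<in> Poly_Mapping.keys (qshuffle a b)" using keys_prefix[of "x + y" "qshuffle a b"] by blast
    then show ?thesis using "3.IH"(3)[OF ca cb] x by (auto simp: is_composition_def)
  qed
qed

lemma in_QSymm_qmult: "in_QSymm x \<Longrightarrow> in_QSymm y \<Longrightarrow> in_QSymm (qmult x y)"
  unfolding in_QSymm_def qmult_def
proof
  fix c assume x: "\<forall>a\<in>Poly_Mapping.keys x. is_composition a" and y: "\<forall>a\<in>Poly_Mapping.keys y. is_composition a"
    and c: "c \<in> Poly_Mapping.keys (frag_extend (\<lambda>a. frag_extend (qshuffle a) y) x)"
  obtain a where a: "a \<in> Poly_Mapping.keys x" "c \<in> Poly_Mapping.keys (frag_extend (qshuffle a) y)"
    using keys_frag_extend[of "\<lambda>a. frag_extend (qshuffle a) y" x] c by blast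
  obtain b where b: "b \<in> Poly_Mapping.keys y" "c \<in> Poly_Mapping.keys (qshuffle a b)"
    using keys_frag_extend[of "qshuffle a" y] a(2) by blast
  show "is_composition c" using qshuffle_comp a b x y by blast
qed

lemma in_QSymm_qone: "in_QSymm qone"
  by (simp add: in_QSymm_def qone_def is_composition_def)

lemma in_QSymm_qpow: "in_QSymm x \<Longrightarrow> in_QSymm (qpow x n)"
  by (induction n) (simp_all add: in_QSymm_qone in_QSymm_qmult)

lemma in_QSymm_diff: "in_QSymm x \<Longrightarrow> in_QSymm y \<Longrightarrow> in_QSymm (x - y)"
  unfolding in_QSymm_def using keys_diff[of x y] by blast

lemma in_QSymm_frob: "n \<ge> 1 \<Longrightarrow> in_QSymm x \<Longrightarrow> in_QSymm (frob n x)"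
  unfolding in_QSymm_def frob_def
proof
  fix c assume n: "n \<ge> 1" and x: "\<forall>a\<in>Poly_Mapping.keys x. is_composition a"
    and c: "c \<in> Poly_Mapping.keys (frag_extend (\<lambda>a. frag_of (map ((*) n) a)) x)"
  obtain a where "a \<in> Poly_Mapping.keys x" "c = map ((*) n) a"
    using keys_frag_extend[of "\<lambda>a. frag_of (map ((*) n) a)" x] c by auto
  then show "is_composition c" using x n by (auto simp: is_composition_def)
qed

lemma lookup_of_nat_mult:
  "Poly_Mapping.lookup ((of_nat p :: mpoly) * h) m = int p * Poly_Mapping.lookup h m"
proof -
  have "Poly_Mapping.lookup (Poly_Mapping.single 0 (of_nat p) * h) (0 + m) = of_nat p * Poly_Mapping.lookup h m"
    by (rule lookup_single_mult_shift)
  then show ?thesis by simp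
qed

lemma frob_div:
  assumes p: "prime p" and x: "in_QSymm x"
  shows "divisible_by p (frob p x - qpow x p)"
  unfolding divisible_by_def
proof
  fix a
  define y where "y = frob p x - qpow x p"
  have p1: "p \<ge> 1" using prime_gt_0_nat[OF p] by simp
  have yQ: "in_QSymm y" unfolding y_def
    by (intro in_QSymm_diff in_QSymm_frob in_QSymm_qpow x p1)
  show "int p dvd Poly_Mapping.lookup (frob p x - qpow x p) a"
  proof (cases "is_composition a")
    case False
    then have "a \<notin> Poly_Mapping.keys y" using yQ by (auto simp: in_QSymm_def)
    then show ?thesis by (simp add: y_def[symmetric] in_keys_iff)
  next
    case True
    define N where "N = length a"
    have "pcong p (ev 0 N (frob p x)) (ev 0 N (qpow x p))"
      using ev_frob[OF p, of 0 N x] by (simp add: ev_qpow)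
    then obtain h where h: "ev 0 N y = of_nat p * h"
      unfolding pcong_def y_def ev_diff by blast
    have "Poly_Mapping.lookup y a = Poly_Mapping.lookup (ev 0 N y) (mon 0 a)"
      using ev_coeff[OF yQ True] by (simp add: N_def)
    also have "\<dots> = int p * Poly_Mapping.lookup h (mon 0 a)"
      by (simp add: h lookup_of_nat_mult)
    finally show ?thesis by (simp add: y_def)
  qed
qed




lemma frob_add: "frob n (x + y) = frob n x + frob n y"
  by (simp add: frob_def frag_extend_add)

lemma frob_cmul: "frob n (frag_cmul c x) = frag_cmul c (frob n x)"
  by (simp add: frob_def frag_extend_cmul)

lemma frob_qone: "frob n qone = qone"
  by (simp add: frob_def qone_def)

lemma frob_prefix:
  "frob n (frag_extend (\<lambda>c. frag_of (x # c)) z) = frag_extend (\<lambda>c. frag_of (n * x # c)) (frob n z)"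
  by (simp add: frob_def frag_extend_comp)

lemma frob_qshuffle: "frob n (qshuffle a b) = qshuffle (map ((*) n) a) (map ((*) n) b)"
proof (induction a b rule: qshuffle.induct)
  case (1 b) then show ?case by (simp add: frob_def)
next
  case (2 x a) then show ?case by (simp add: frob_def)
next
  case (3 x a y b)
  show ?case
    by (simp only: qshuffle.simps list.map frob_add frob_prefix 3 add_mult_distrib2)
qed

lemma frob_qmult: "frob n (qmult x y) = qmult (frob n x) (frob n y)"
proof -
  have "frob n (qmult x y) = frag_extend (\<lambda>a. frag_extend (\<lambda>b. frob n (qshuffle a b)) y) x"
    unfolding qmult_def frob_def by (simp add: frag_extend_comp)
  also have "\<dots> = frag_extend (\<lambda>a. frag_extend (\<lambda>b. qshuffle (map ((*) n) a) (map ((*) n) b)) y) x"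
    by (simp add: frob_qshuffle)
  also have "\<dots> = qmult (frob n x) (frob n y)"
    unfolding qmult_def frob_def by (simp add: frag_extend_comp)
  finally show ?thesis .
qed

lemma frob_coprod: "qcoprod (frob n x) = tensor_map (frob n) (qcoprod x)"
  unfolding qcoprod_def tensor_map_def
  by (simp add: frob_def frag_extend_comp frag_extend_sum qtensor_def take_map drop_map comp_def)

lemma lookup_frob:
  "Poly_Mapping.lookup (frob n x) b = (\<Sum>c\<in>Poly_Mapping.keys x. Poly_Mapping.lookup x c * (if b = map ((*) n) c then 1 else 0))"
  unfolding frob_def lookup_frag_extend by simp

lemma frob_counit: "qcounit (frob n x) = qcounit x"
proof -
  have "Poly_Mapping.lookup (frob n x) [] = (\<Sum>c\<in>Poly_Mapping.keys x. Poly_Mapping.lookup x c * (if c = [] then 1 else 0))"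
    unfolding lookup_frob by (intro sum.cong) auto
  also have "\<dots> = (\<Sum>c\<in>Poly_Mapping.keys x. if c = [] then Poly_Mapping.lookup x c else 0)"
    by (intro sum.cong) auto
  also have "\<dots> = Poly_Mapping.lookup x []" by (simp add: sum.delta' in_keys_iff)
  finally show ?thesis by (simp add: qcounit_def)
qed

lemma map_mult_inj: "(n::nat) \<ge> 1 \<Longrightarrow> map ((*) n) b = map ((*) n) c \<longleftrightarrow> b = c"
proof -
  assume "n \<ge> 1"
  then have "inj ((*) n)" by (simp add: inj_on_def)
  then show ?thesis by (simp add: inj_map_eq_map)
qed

lemma lookup_frob_img:
  assumes n: "n \<ge> 1"
  shows "Poly_Mapping.lookup (frob n x) (map ((*) n) c) = Poly_Mapping.lookup x c"
proof -
  have "Poly_Mapping.lookup (frob n x) (map ((*) n) c) = (\<Sum>c'\<in>Poly_Mapping.keys x. if c' = c then Poly_Mapping.lookup x c' else 0)"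
    unfolding lookup_frob by (intro sum.cong) (auto simp: map_mult_inj[OF n])
  also have "\<dots> = Poly_Mapping.lookup x c" by (simp add: sum.delta' in_keys_iff)
  finally show ?thesis .
qed

lemma lookup_frob_notimg: "(\<forall>c. b \<noteq> map ((*) n) c) \<Longrightarrow> Poly_Mapping.lookup (frob n x) b = 0"
  unfolding lookup_frob by (intro sum.neutral) auto

lemma img_iff: "(n::nat) \<ge> 1 \<Longrightarrow> (\<exists>c. a = map ((*) n) c) \<longleftrightarrow> (\<forall>t\<in>set a. n dvd t)"
proof
  assume "\<forall>t\<in>set a. n dvd t"
  then have "map ((*) n) (map (\<lambda>t. t div n) a) = a"
    by (simp add: map_idI)
  then show "\<exists>c. a = map ((*) n) c" by metis
qed auto

lemma frob_Symm:
  assumes n: "n \<ge> 1" and x: "in_Symm x"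
  shows "in_Symm (frob n x)"
  unfolding in_Symm_def
proof (intro conjI allI impI)
  show "in_QSymm (frob n x)" using x n in_QSymm_frob by (auto simp: in_Symm_def)
next
  fix a b :: "nat list" assume m: "mset a = mset b"
  then have sab: "set a = set b" by (metis set_mset_mset)
  show "Poly_Mapping.lookup (frob n x) a = Poly_Mapping.lookup (frob n x) b"
  proof (cases "\<exists>c. a = map ((*) n) c")
    case True
    then obtain c where c: "a = map ((*) n) c" by blast
    from True have "\<exists>d. b = map ((*) n) d" using img_iff[OF n] sab by simp
    then obtain d where d: "b = map ((*) n) d" by blast
    have "mset c = mset d"
    proof -
      have "mset c = mset (map (\<lambda>t. t div n) a)" using c n by (simp add: map_map comp_def)
      also have "\<dots> = mset (map (\<lambda>t. t div n) b)" using m by simp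
      also have "\<dots> = mset d" using d n by (simp add: map_map comp_def)
      finally show ?thesis .
    qed
    then have "Poly_Mapping.lookup x c = Poly_Mapping.lookup x d" using x unfolding in_Symm_def by blast
    then show ?thesis using c d n by (simp add: lookup_frob_img)
  next
    case False
    then have "\<not> (\<exists>d. b = map ((*) n) d)" using img_iff[OF n] sab by simp
    then show ?thesis using False by (simp add: lookup_frob_notimg)
  qed
qed

theorem mainTheorem6:
  shows "(\<forall>n::nat. n \<ge> 1 \<longrightarrow> hopf_endo (frob n))
   \<and> (\<forall>x. in_QSymm x \<longrightarrow> frob 1 x = x)
   \<and> (\<forall>n m x. n \<ge> 1 \<longrightarrow> m \<ge> 1 \<longrightarrow> in_QSymm x \<longrightarrow> frob n (frob m x) = frob (n * m) x)
   \<and> (\<forall>n x. n \<ge> 1 \<longrightarrow> in_Symm x \<longrightarrow> in_Symm (frob n x))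
   \<and> (\<forall>n k. n \<ge> 1 \<longrightarrow> k \<ge> 1 \<longrightarrow> frob n (psum k) = psum (n * k))
   \<and> (\<forall>p x. prime p \<longrightarrow> in_QSymm x \<longrightarrow> divisible_by p (frob p x - qpow x p))"
proof (intro conjI allI impI)
  fix n :: nat assume "n \<ge> 1"
  then show "hopf_endo (frob n)"
    unfolding hopf_endo_def
    by (simp add: in_QSymm_frob frob_add frob_cmul frob_qone frob_qmult frob_coprod frob_counit)
next
  fix x show "frob 1 x = x"
    by (simp add: frob_def) (metis frag_expansion)
next
  fix n m x show "frob n (frob m x) = frob (n * m) x"
    by (simp add: frob_def frag_extend_comp mult.assoc comp_def)
next
  fix n x assume "n \<ge> (1::nat)" "in_Symm x" then show "in_Symm (frob n x)" by (rule frob_Symm)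
next
  fix n k :: nat show "frob n (psum k) = psum (n * k)" by (simp add: frob_def psum_def)
next
  fix p :: nat and x assume "prime p" "in_QSymm x" then show "divisible_by p (frob p x - qpow x p)" by (rule frob_div)
qed


end
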